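(* Let $\odot$ be a non-degenerate pseudo-multiplication and let $\tau$ be a $\sigma$-maxitive measure on a $\sigma$-algebra $\mathcal{B}$ on a nonempty set $E$ having the Radon–Nikodym property with respect to the idempotent $\odot$-integral. Then $\tau$ is semi-$\odot$-finite, i.e. for every $B\in\mathcal{B}$, $$\tau(B)=\sup\{\tau(A):A\in\mathcal{B},\ A\subset B,\ \tau(A)\text{ is }\odot\text{-finite}\}.$$
   Context: Write $\overline{\mathbb{R}}_+=[0,\infty]$. A pseudo-multiplication is a binary operation $\odot$ on $\overline{\mathbb{R}}_+$ with the following properties: - it is associative; - it is continuous on $(0,\infty)\times[0,\infty]$; - for every $t$, the map $s\mapsto s\odot t$ is continuous on $(0,\infty]$; - it is nondecreasing in each argument; - it has a left identity $1_\odot$, i.e. $1_\odot\odot t=t$ for all $t$; - it has no zero divisors, i.e. $s\odot t=0$ implies $s=0$ or $t=0$; - $0\odot t=t\odot 0=0$ for all $t$. Put $O(t)=\inf_{s>0}s\odot t$. An element $t$ is $\odot$-finite if $O(t)=0$, and $\odot$-infinite otherwise. The operation $\odot$ is non-degenerate if $1_\odot$ is $\odot$-finite. A $\sigma$-maxitive measure on $\mathcal{B}$ is a map $\nu:\mathcal{B}\to\overline{\mathbb{R}}_+$ with $\nu(\emptyset)=0$ and $\nu(\bigcup_j B_j)=\sup_j\nu(B_j)$ for every countable family. A map $f:E\to\overline{\mathbb{R}}_+$ is $\mathcal{B}$-measurable if $\{f>t\}\in\mathcal{B}$ for all $t\in[0,\infty)$. The idempotent $\odot$-integral is $\int^\infty_B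 f\odot d\tau=\sup_{t\in[0,\infty)}t\odot\tau(B\cap\{f>t\})$. $\nu\ll_\odot\tau$ means $\nu(B)\le\infty\odot\tau(B)$ for every $B\in\mathcal{B}$ with $\tau(B)$ $\odot$-finite. $\tau$ has the Radon–Nikodym property if every $\sigma$-maxitive $\nu\ll_\odot\tau$ admits a $\mathcal{B}$-measurable $c:E\to\overline{\mathbb{R}}_+$ with $\nu(B)=\int^\infty_B c\odot d\tau$ for all $B\in\mathcal{B}$. *)

theory Defs
  imports "HOL-Analysis.Analysis"
begin

definition pseudo_mult :: "(ennreal \<Rightarrow> ennreal \<Rightarrow> ennreal) \<Rightarrow> bool" where
  "pseudo_mult m \<longleftrightarrow>
     (\<forall>a b c. m (m a b) c = m a (m b c)) \<and>
     continuous_on ({0<..<\<infinity>} \<times> UNIV) (\<lambda>p. m (fst p) (snd p)) \<and>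
     (\<forall>t. continuous_on {0<..} (\<lambda>s. m s t)) \<and>
     (\<forall>a b c d. a \<le> b \<and> c \<le> d \<longrightarrow> m a c \<le> m b d) \<and>
     (\<exists>e. \<forall>t. m e t = t) \<and>
     (\<forall>s t. m s t = 0 \<longrightarrow> s = 0 \<or> t = 0) \<and>
     (\<forall>t. m 0 t = 0 \<and> m t 0 = 0)"

definition pm_O :: "(ennreal \<Rightarrow> ennreal \<Rightarrow> ennreal) \<Rightarrow> ennreal \<Rightarrow> ennreal" where
  "pm_O m t = (INF s\<in>{0<..}. m s t)"

definition pm_finite :: "(ennreal \<Rightarrow> ennreal \<Rightarrow> ennreal) \<Rightarrow> ennreal \<Rightarrow> bool" where
  "pm_finite m t \<longleftrightarrow> pm_O m t = 0"

text \<open>Non-degenerate: the left identity is finite (existential reading).\<close>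
definition pm_nondegenerate :: "(ennreal \<Rightarrow> ennreal \<Rightarrow> ennreal) \<Rightarrow> bool" where
  "pm_nondegenerate m \<longleftrightarrow> (\<exists>e. (\<forall>t. m e t = t) \<and> pm_finite m e)"

definition sigma_maxitive :: "'a set set \<Rightarrow> ('a set \<Rightarrow> ennreal) \<Rightarrow> bool" where
  "sigma_maxitive B \<nu> \<longleftrightarrow> \<nu> {} = 0 \<and>
     (\<forall>F::nat \<Rightarrow> 'a set. range F \<subseteq> B \<longrightarrow> \<nu> (\<Union>j. F j) = (SUP j. \<nu> (F j)))"

definition B_measurable :: "'a set \<Rightarrow> 'a set set \<Rightarrow> ('a \<Rightarrow> ennreal) \<Rightarrow> bool" where
  "B_measurable E B f \<longleftrightarrow> (\<forall>t::ennreal. t < \<infinity> \<longrightarrow> {x\<in>E. f x > t} \<in> B)"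

definition idem_integral ::
  "(ennreal \<Rightarrow> ennreal \<Rightarrow> ennreal) \<Rightarrow> 'a set \<Rightarrow> ('a set \<Rightarrow> ennreal) \<Rightarrow> 'a set \<Rightarrow> ('a \<Rightarrow> ennreal) \<Rightarrow> ennreal" where
  "idem_integral m E \<tau> A f = (SUP t\<in>{t::ennreal. t < \<infinity>}. m t (\<tau> (A \<inter> {x\<in>E. f x > t})))"

definition pm_abs_cont ::
  "(ennreal \<Rightarrow> ennreal \<Rightarrow> ennreal) \<Rightarrow> 'a set set \<Rightarrow> ('a set \<Rightarrow> ennreal) \<Rightarrow> ('a set \<Rightarrow> ennreal) \<Rightarrow> bool" where
  "pm_abs_cont m B \<nu> \<tau> \<longleftrightarrow> (\<forall>A\<in>B. pm_finite m (\<tau> A) \<longrightarrow> \<nu> A \<le> m \<infinity> (\<tau> A))"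

definition radon_nikodym_prop ::
  "(ennreal \<Rightarrow> ennreal \<Rightarrow> ennreal) \<Rightarrow> 'a set \<Rightarrow> 'a set set \<Rightarrow> ('a set \<Rightarrow> ennreal) \<Rightarrow> bool" where
  "radon_nikodym_prop m E B \<tau> \<longleftrightarrow>
     (\<forall>\<nu>. sigma_maxitive B \<nu> \<and> pm_abs_cont m B \<nu> \<tau> \<longrightarrow>
        (\<exists>c. B_measurable E B c \<and> (\<forall>A\<in>B. \<nu> A = idem_integral m E \<tau> A c)))"

definition semi_pm_finite ::
  "(ennreal \<Rightarrow> ennreal \<Rightarrow> ennreal) \<Rightarrow> 'a set set \<Rightarrow> ('a set \<Rightarrow> ennreal) \<Rightarrow> bool" where
  "semi_pm_finite m B \<tau> \<longleftrightarrow>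
     (\<forall>A\<in>B. \<tau> A = (SUP C\<in>{C\<in>B. C \<subseteq> A \<and> pm_finite m (\<tau> C)}. \<tau> C))"

end

theory Submission
  imports Defs
begin

lemma ennreal_pos_ex: "(0::ennreal) < y \<Longrightarrow> \<exists>n. ennreal (1 / real (Suc n)) < y"
proof (cases y)
  case (real r)
  assume "0 < y"
  then have "r > 0" using real by (simp add: ennreal_less_iff)
  then obtain n where "inverse (real (Suc n)) < r" using reals_Archimedean by blast
  then show ?thesis using real
    by (metis ennreal_lessI inverse_eq_divide \<open>0 < r\<close>)
next
  case top then show ?thesis by auto
qed

lemma pm_assoc: "pseudo_mult m \<Longrightarrow> m (m a b) c = m a (m b c)"
  unfolding pseudo_mult_def by (elim conjE) (erule allE)+
lemma pm_mono: "pseudo_mult m \<Longrightarrow> a \<le> b \<Longrightarrow> c \<le> d \<Longrightarrow> m a c \<le> m b d"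
  unfolding pseudo_mult_def by (elim conjE) (simp only:)
lemma pm_nzd: "pseudo_mult m \<Longrightarrow> m s t = 0 \<Longrightarrow> s = 0 \<or> t = 0"
  unfolding pseudo_mult_def by (elim conjE) (simp only:)
lemma pm_zero2: "pseudo_mult m \<Longrightarrow> m t 0 = 0"
  unfolding pseudo_mult_def by (elim conjE) (simp only:)
lemma pm_zero: "pseudo_mult m \<Longrightarrow> m 0 t = 0"
  unfolding pseudo_mult_def by (elim conjE) (simp only:)

lemma sm0: "sigma_maxitive B t \<Longrightarrow> t {} = 0" by (simp add: sigma_maxitive_def)
lemma smmax: "sigma_maxitive B t \<Longrightarrow> range (F::nat\<Rightarrow>_) \<subseteq> B \<Longrightarrow> t (\<Union>j. F j) = (SUP j. t (F j))"
  unfolding sigma_maxitive_def by blast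

theorem mainTheorem9:
  fixes m :: "ennreal \<Rightarrow> ennreal \<Rightarrow> ennreal"
    and E :: "'a set" and B :: "'a set set" and \<tau> :: "'a set \<Rightarrow> ennreal"
  assumes "pseudo_mult m"
    and "pm_nondegenerate m"
    and "E \<noteq> {}"
    and "sigma_algebra E B"
    and "sigma_maxitive B \<tau>"
    and "radon_nikodym_prop m E B \<tau>"
  shows "semi_pm_finite m B \<tau>"
proof -
  have assoc: "\<And>a b c. m (m a b) c = m a (m b c)"
    using assms(1) by (rule pm_assoc)
  have mono: "\<And>a b c d. a \<le> b \<Longrightarrow> c \<le> d \<Longrightarrow> m a c \<le> m b d"
    using assms(1) by (rule pm_mono)
  have nzd: "\<And>s t. m s t = 0 \<Longrightarrow> s = 0 \<or> t = 0"
    using assms(1) by (rule pm_nzd)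
  have zero: "\<And>t. m 0 t = 0"
    using assms(1) by (rule pm_zero)
  obtain e where e: "\<And>t. m e t = t" and efin: "pm_finite m e"
    using assms(2) unfolding pm_nondegenerate_def by blast
  have Dif: "\<And>a b. a \<in> B \<Longrightarrow> b \<in> B \<Longrightarrow> a - b \<in> B"
  proof -
    interpret sigma_algebra E B by fact
    show "\<And>a b. a \<in> B \<Longrightarrow> b \<in> B \<Longrightarrow> a - b \<in> B" by (rule Diff)
  qed
  have Intr: "\<And>a b. a \<in> B \<Longrightarrow> b \<in> B \<Longrightarrow> a \<inter> b \<in> B"
  proof -
    interpret sigma_algebra E B by fact
    show "\<And>a b. a \<in> B \<Longrightarrow> b \<in> B \<Longrightarrow> a \<inter> b \<in> B" by (rule Int)
  qed
  have tau0: "\<tau> {} = 0"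
    using assms(5) by (rule sm0)
  have taumax: "\<And>F::nat\<Rightarrow>'a set. range F \<subseteq> B \<Longrightarrow> \<tau> (\<Union>j. F j) = (SUP j. \<tau> (F j))"
    using assms(5) by (rule smmax)
  have taumono: "\<tau> A \<le> \<tau> C" if "A \<in> B" "C \<in> B" "A \<subseteq> C" for A C
  proof -
    let ?F = "\<lambda>j::nat. if j = 0 then A else C"
    have "range ?F \<subseteq> B" using that by auto
    moreover have "(\<Union>j. ?F j) = C" using that by (auto split: if_splits)
    ultimately have "\<tau> C = (SUP j. \<tau> (?F j))" using taumax by metis
    also have "\<tau> A \<le> \<dots>" by (rule SUP_upper2[of 0]) auto
    finally show ?thesis by simp
  qed
  have Omono: "pm_O m a \<le> pm_O m b" if "a \<le> b" for a b
    unfolding pm_O_def by (rule INF_mono) (use that mono in blast)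
  define \<nu> where "\<nu> A = min (\<tau> A) e" for A
  have nusm: "sigma_maxitive B \<nu>"
    unfolding sigma_maxitive_def \<nu>_def
  proof (intro conjI allI impI)
    show "min (\<tau> {}) e = 0" using tau0 by simp
    fix F :: "nat \<Rightarrow> 'a set" assume "range F \<subseteq> B"
    then have "\<tau> (\<Union>j. F j) = (SUP j. \<tau> (F j))" by (rule taumax)
    then show "min (\<tau> (\<Union>j. F j)) e = (SUP j. min (\<tau> (F j)) e)"
      by (simp add: inf_min[symmetric] SUP_inf)
  qed
  have "\<tau> A \<le> m \<infinity> (\<tau> A)" for A
    using mono[of e \<infinity> "\<tau> A" "\<tau> A"] e by simp
  then have nuac: "pm_abs_cont m B \<nu> \<tau>"
    unfolding pm_abs_cont_def \<nu>_def by (meson min.coboundedI1)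
  obtain c where cm: "B_measurable E B c" and crep: "\<And>A. A \<in> B \<Longrightarrow> \<nu> A = idem_integral m E \<tau> A c"
    using assms(6) nusm nuac unfolding radon_nikodym_prop_def by blast
  have e0: "e \<noteq> 0" using e[of 1] zero by force
  define t where "t n = ennreal (1 / real (Suc n))" for n
  have tpos: "t n > 0" "t n < \<infinity>" for n unfolding t_def by auto
  define S where "S = {x\<in>E. c x > 0}"
  have SB: "S \<in> B" using cm unfolding B_measurable_def S_def by auto
  have SnB: "{x\<in>E. c x > t n} \<in> B" for n using cm tpos unfolding B_measurable_def by auto
  show ?thesis unfolding semi_pm_finite_def
  proof
    fix A assume A: "A \<in> B"
    let ?S = "{C \<in> B. C \<subseteq> A \<and> pm_finite m (\<tau> C)}"
    define A0 where "A0 = A - S"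
    define An where "An n = A \<inter> {x\<in>E. c x > t n}" for n
    have A0B: "A0 \<in> B" unfolding A0_def using A SB by (rule Dif)
    have AnB: "An n \<in> B" for n unfolding An_def using A SnB by (rule Intr)
    have tA0: "\<tau> A0 = 0"
    proof -
      have "A0 \<inter> {x\<in>E. c x > s} = {}" for s unfolding A0_def S_def using order.strict_trans1[OF zero_le, of s] by auto
      then have "idem_integral m E \<tau> A0 c = 0"
        unfolding idem_integral_def using tau0 pm_zero2[OF assms(1)] by (simp, intro SUP_eqI, auto)
      then have "min (\<tau> A0) e = 0" using crep[OF A0B] \<nu>_def by simp
      then show ?thesis using e0 by (simp add: min_def split: if_splits)
    qed
    have Anfin: "pm_finite m (\<tau> (An n))" for n
    proof -
      have eqA: "An n \<inter> {x\<in>E. c x > t n} = An n" unfolding An_def by auto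
      have "m (t n) (\<tau> (An n \<inter> {x\<in>E. c x > t n})) \<le> idem_integral m E \<tau> (An n) c"
        unfolding idem_integral_def by (rule SUP_upper) (simp add: t_def)
      then have "m (t n) (\<tau> (An n)) \<le> idem_integral m E \<tau> (An n) c"
        by (simp only: eqA)
      also have "\<dots> = \<nu> (An n)" using crep[OF AnB] by simp
      finally have le: "m (t n) (\<tau> (An n)) \<le> \<nu> (An n)" .
      have "pm_O m (\<nu> (An n)) \<le> pm_O m e" using Omono \<nu>_def by simp
      then have Onu: "pm_O m (\<nu> (An n)) = 0" using efin unfolding pm_finite_def by simp
      have "pm_O m (\<tau> (An n)) \<le> (INF r\<in>{0<..}. m r (\<nu> (An n)))"
        unfolding pm_O_def
      proof (rule INF_greatest)
        fix r :: ennreal assume r: "r \<in> {0<..}"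
        have "m r (t n) \<noteq> 0" using nzd[of r "t n"] r tpos(1)[of n] by auto
        then have "m r (t n) > 0" by (simp add: zero_less_iff_neq_zero)
        then have "(INF s\<in>{0<..}. m s (\<tau> (An n))) \<le> m (m r (t n)) (\<tau> (An n))"
          by (intro INF_lower) auto
        also have "\<dots> = m r (m (t n) (\<tau> (An n)))" by (rule assoc)
        also have "\<dots> \<le> m r (\<nu> (An n))" using mono le by blast
        finally show "(INF s\<in>{0<..}. m s (\<tau> (An n))) \<le> m r (\<nu> (An n))" .
      qed
      then show ?thesis using Onu unfolding pm_finite_def pm_O_def by simp
    qed
    show "\<tau> A = (SUP C\<in>?S. \<tau> C)"
    proof (rule antisym)
      define F where "F j = (case j of 0 \<Rightarrow> A0 | Suc n \<Rightarrow> An n)" for j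
      have FB: "range F \<subseteq> B" using A0B AnB by (auto simp: F_def split: nat.splits)
      have "(\<Union>j. F j) = A"
      proof
        show "(\<Union>j. F j) \<subseteq> A" by (auto simp: F_def A0_def An_def split: nat.splits)
        show "A \<subseteq> (\<Union>j. F j)"
        proof
          fix x assume x: "x \<in> A"
          show "x \<in> (\<Union>j. F j)"
          proof (cases "x \<in> S")
            case False then have "x \<in> F 0" using x by (simp add: F_def A0_def)
            then show ?thesis by blast
          next
            case True
            then obtain n where "t n < c x" using ennreal_pos_ex unfolding S_def t_def by auto
            then have "x \<in> F (Suc n)" using x True by (simp add: F_def An_def S_def)
            then show ?thesis by blast
          qed
        qed
      qed
      then have "\<tau> A = (SUP j. \<tau> (F j))" using taumax[OF FB] by simp
      also have "\<dots> \<le> (SUP C\<in>?S. \<tau> C)"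
      proof (rule SUP_least)
        fix j show "\<tau> (F j) \<le> (SUP C\<in>?S. \<tau> C)"
        proof (cases j)
          case 0 then show ?thesis using tA0 by (simp add: F_def)
        next
          case (Suc n)
          have "An n \<in> ?S" using AnB Anfin by (auto simp: An_def)
          then show ?thesis using Suc by (simp add: F_def SUP_upper)
        qed
      qed
      finally show "\<tau> A \<le> (SUP C\<in>?S. \<tau> C)" .
      show "(SUP C\<in>?S. \<tau> C) \<le> \<tau> A" using taumono A by (auto intro: SUP_least)
    qed
  qed
qed

end
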